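(* Let $D$ be a pv-monoid (idempotent, with symmetric valuation function), $P$ a nonempty finite set of ports and $f$ a PCL formula over $P$. Then there exist finite index sets $I$ and $J_i$ ($i\in I$) and full monomials $m_{i,j}$ ($i\in I$, $j\in J_i$) such that \[f\equiv\bigoplus_{i\in I}\sum_{j\in J_i}m_{i,j}\equiv\bigoplus_{i\in I}\Big(1\otimes\sum_{j\in J_i}m_{i,j}\Big).\]
   Context: A pv-monoid $(D,\oplus,\mathrm{val},\otimes,0,1)$ consists of a commutative monoid $(D,\oplus,0)$, a map $\mathrm{val}$ from nonempty finite sequences over $D$ to $D$ with $\mathrm{val}(d)=d$ and $\mathrm{val}(d_1,\dots,d_n)=0$ whenever some $d_i=0$, a binary operation $\otimes$ and an element $1$ with $\mathrm{val}(1,\dots,1)=1$, $0\otimes d=d\otimes0=0$, $1\otimes d=d\otimes1=d$. Standing assumption: $D$ is idempotent and $\mathrm{val}$ is symmetric. An empty $\oplus$-sum is $0$. $I(P)$ is the set of nonempty subsets of $P$, $C(P)$ the set of nonempty subsets of $I(P)$. PIL formulas: $\phi::=true\mid p\mid\overline{\phi}\mid\phi\vee\phi$ ($p\in P$), $\alpha\models_i p$ iff $p\in\alpha$, negation and disjunction as usual, $\wedge$ via De Morgan. A full monomial is a PIL formula $\bigwedge_{p\in P_+}p\wedge\bigwedge_{p\in P_-}\overline p$ with $P_+\cup P_-=P$, $P_+\cap P_-=\emptyset$. PCL formulas: $f::=true\mid\phi\mid\neg f\mid f\sqcup f\mid f+f$; $\gamma\models true$; $\gamma\models\phi$ iff every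 $\alpha\in\gamma$ satisfies $\phi$; $\neg,\sqcup$ are complement and union; $\gamma\models f_1+f_2$ iff $\gamma=\gamma_1\cup\gamma_2$ with $\gamma_1,\gamma_2\in C(P)$, $\gamma_1\models f_1,\gamma_2\models f_2$. $\sum_{j\in J}m_j$ is the $+$-combination. Weighted formulas are built from constants $d\in D$ and PCL formulas by $\oplus,\otimes$ (and further operators); semantics $\|\cdot\|:C(P)\to D$ with $\|d\|(\gamma)=d$, $\|f\|(\gamma)=1$ if $\gamma\models f$ and $0$ otherwise, $\oplus,\otimes$ pointwise. $\equiv$ means equality of semantics on all of $C(P)$. *)

theory Defs
  imports Main "HOL-Library.Multiset"
begin

text \<open>The valuation function val is defined on nonempty finite sequences; it is
modelled as a function on lists whose value on the empty list is irrelevant.\<close>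

definition pv_monoid ::
  "('d \<Rightarrow> 'd \<Rightarrow> 'd) \<Rightarrow> ('d list \<Rightarrow> 'd) \<Rightarrow> ('d \<Rightarrow> 'd \<Rightarrow> 'd) \<Rightarrow> 'd \<Rightarrow> 'd \<Rightarrow> bool" where
  "pv_monoid add val mul z u \<longleftrightarrow>
     (\<forall>a b c. add (add a b) c = add a (add b c)) \<and>
     (\<forall>a b. add a b = add b a) \<and>
     (\<forall>a. add z a = a) \<and>
     (\<forall>d. val [d] = d) \<and>
     (\<forall>xs. xs \<noteq> [] \<and> z \<in> set xs \<longrightarrow> val xs = z) \<and>
     (\<forall>n. n \<ge> 1 \<longrightarrow> val (replicate n u) = u) \<and>
     (\<forall>d. mul z d = z \<and> mul d z = z) \<and>
     (\<forall>d. mul u d = d \<and> mul d u = d)"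

definition idempotent_pv :: "('d \<Rightarrow> 'd \<Rightarrow> 'd) \<Rightarrow> bool" where
  "idempotent_pv add \<longleftrightarrow> (\<forall>d. add d d = d)"

definition symmetric_val :: "('d list \<Rightarrow> 'd) \<Rightarrow> bool" where
  "symmetric_val val \<longleftrightarrow> (\<forall>xs ys. xs \<noteq> [] \<and> mset xs = mset ys \<longrightarrow> val xs = val ys)"

datatype 'p pil = PTrue | PVar 'p | PNot "'p pil" | POr "'p pil" "'p pil"

fun pil_atoms :: "'p pil \<Rightarrow> 'p set" where
  "pil_atoms PTrue = {}"
| "pil_atoms (PVar p) = {p}"
| "pil_atoms (PNot \<phi>) = pil_atoms \<phi>"
| "pil_atoms (POr \<phi> \<psi>) = pil_atoms \<phi> \<union> pil_atoms \<psi>"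

fun pil_sat :: "'p set \<Rightarrow> 'p pil \<Rightarrow> bool" where
  "pil_sat \<alpha> PTrue = True"
| "pil_sat \<alpha> (PVar p) = (p \<in> \<alpha>)"
| "pil_sat \<alpha> (PNot \<phi>) = (\<not> pil_sat \<alpha> \<phi>)"
| "pil_sat \<alpha> (POr \<phi> \<psi>) = (pil_sat \<alpha> \<phi> \<or> pil_sat \<alpha> \<psi>)"

definition PAnd :: "'p pil \<Rightarrow> 'p pil \<Rightarrow> 'p pil" where
  "PAnd \<phi> \<psi> = PNot (POr (PNot \<phi>) (PNot \<psi>))"

definition lit :: "'p set \<Rightarrow> 'p \<Rightarrow> 'p pil" where
  "lit Pplus p = (if p \<in> Pplus then PVar p else PNot (PVar p))"

fun monomial :: "'p set \<Rightarrow> 'p list \<Rightarrow> 'p pil" where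
  "monomial Pplus [] = PTrue"
| "monomial Pplus [p] = lit Pplus p"
| "monomial Pplus (p # ps) = PAnd (lit Pplus p) (monomial Pplus ps)"

definition full_monomial :: "'p set \<Rightarrow> 'p pil \<Rightarrow> bool" where
  "full_monomial P m \<longleftrightarrow>
     (\<exists>xs Pplus. set xs = P \<and> distinct xs \<and> Pplus \<subseteq> P \<and> m = monomial Pplus xs)"

definition I_P :: "'p set \<Rightarrow> 'p set set" where
  "I_P P = {\<alpha>. \<alpha> \<subseteq> P \<and> \<alpha> \<noteq> {}}"

definition C_P :: "'p set \<Rightarrow> 'p set set set" where
  "C_P P = {\<gamma>. \<gamma> \<subseteq> I_P P \<and> \<gamma> \<noteq> {}}"

datatype 'p pcl = CTrue | CPil "'p pil" | CNot "'p pcl" | CSqcup "'p pcl" "'p pcl"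
  | CPlus "'p pcl" "'p pcl"

fun pcl_atoms :: "'p pcl \<Rightarrow> 'p set" where
  "pcl_atoms CTrue = {}"
| "pcl_atoms (CPil \<phi>) = pil_atoms \<phi>"
| "pcl_atoms (CNot f) = pcl_atoms f"
| "pcl_atoms (CSqcup f g) = pcl_atoms f \<union> pcl_atoms g"
| "pcl_atoms (CPlus f g) = pcl_atoms f \<union> pcl_atoms g"

fun pcl_sat :: "'p set \<Rightarrow> 'p set set \<Rightarrow> 'p pcl \<Rightarrow> bool" where
  "pcl_sat P \<gamma> CTrue = True"
| "pcl_sat P \<gamma> (CPil \<phi>) = (\<forall>\<alpha>\<in>\<gamma>. pil_sat \<alpha> \<phi>)"
| "pcl_sat P \<gamma> (CNot f) = (\<not> pcl_sat P \<gamma> f)"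
| "pcl_sat P \<gamma> (CSqcup f g) = (pcl_sat P \<gamma> f \<or> pcl_sat P \<gamma> g)"
| "pcl_sat P \<gamma> (CPlus f g) =
     (\<exists>\<gamma>1 \<gamma>2. \<gamma>1 \<in> C_P P \<and> \<gamma>2 \<in> C_P P \<and> \<gamma> = \<gamma>1 \<union> \<gamma>2 \<and> pcl_sat P \<gamma>1 f \<and> pcl_sat P \<gamma>2 g)"

fun plus_list :: "'p pil list \<Rightarrow> 'p pcl" where
  "plus_list [] = CTrue"
| "plus_list [m] = CPil m"
| "plus_list (m # ms) = CPlus (CPil m) (plus_list ms)"

datatype ('p, 'd) wpcl = WConst 'd | WPcl "'p pcl" | WOplus "('p, 'd) wpcl" "('p, 'd) wpcl"
  | WOtimes "('p, 'd) wpcl" "('p, 'd) wpcl"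

fun wsem :: "('d \<Rightarrow> 'd \<Rightarrow> 'd) \<Rightarrow> ('d \<Rightarrow> 'd \<Rightarrow> 'd) \<Rightarrow> 'd \<Rightarrow> 'd \<Rightarrow> 'p set
    \<Rightarrow> ('p, 'd) wpcl \<Rightarrow> 'p set set \<Rightarrow> 'd" where
  "wsem add mul z u P (WConst d) \<gamma> = d"
| "wsem add mul z u P (WPcl f) \<gamma> = (if pcl_sat P \<gamma> f then u else z)"
| "wsem add mul z u P (WOplus w v) \<gamma> =
     add (wsem add mul z u P w \<gamma>) (wsem add mul z u P v \<gamma>)"
| "wsem add mul z u P (WOtimes w v) \<gamma> =
     mul (wsem add mul z u P w \<gamma>) (wsem add mul z u P v \<gamma>)"

fun oplus_list :: "'d \<Rightarrow> ('p, 'd) wpcl list \<Rightarrow> ('p, 'd) wpcl" where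
  "oplus_list z [] = WConst z"
| "oplus_list z [w] = w"
| "oplus_list z (w # ws) = WOplus w (oplus_list z ws)"

end

theory Submission
  imports Defs
begin

lemma sat_PAnd[simp]: "pil_sat b (PAnd x y) = (pil_sat b x \<and> pil_sat b y)"
  by (simp add: PAnd_def)

lemma sat_monomial: "pil_sat b (monomial A xs) = (\<forall>p\<in>set xs. p \<in> b \<longleftrightarrow> p \<in> A)"
  by (induction A xs rule: monomial.induct) (auto simp: lit_def)

lemma plus_list_sat_aux:
  "\<forall>\<gamma>. as \<noteq> [] \<longrightarrow> set as \<subseteq> I_P P \<longrightarrow>
     (\<forall>bb\<in>I_P P. \<forall>aa\<in>set as. pil_sat bb (M aa) = (bb = aa)) \<longrightarrow>
     \<gamma> \<in> C_P P \<longrightarrow> pcl_sat P \<gamma> (plus_list (map M as)) = (\<gamma> = set as)"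
proof (induction as rule: induct_list012)
  case 1 then show ?case by simp
next
  case (2 a)
  then show ?case by (auto simp: C_P_def)
next
  case (3 a b rest)
  show ?case
  proof (intro allI impI)
    fix \<gamma>
    assume sub: "set (a # b # rest) \<subseteq> I_P P"
      and MM: "\<forall>bb\<in>I_P P. \<forall>aa\<in>set (a # b # rest). pil_sat bb (M aa) = (bb = aa)"
      and c: "\<gamma> \<in> C_P P"
    have M2: "\<forall>bb\<in>I_P P. \<forall>aa\<in>set (b # rest). pil_sat bb (M aa) = (bb = aa)"
      using MM by simp
    have sub2: "set (b # rest) \<subseteq> I_P P" using sub by simp
    have IH: "\<And>g. g \<in> C_P P \<Longrightarrow> pcl_sat P g (plus_list (map M (b # rest))) = (g = set (b # rest))"
      using 3(2) M2 sub2 by blast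
    have a: "a \<in> I_P P" using sub by simp
    have Ma: "\<And>bb. bb \<in> I_P P \<Longrightarrow> pil_sat bb (M a) = (bb = a)" using MM by simp
    have s1: "{a} \<in> C_P P" using a by (auto simp: C_P_def)
    have s2: "set (b # rest) \<in> C_P P" using sub2 by (auto simp: C_P_def)
    have sa: "\<And>g. g \<in> C_P P \<Longrightarrow> pcl_sat P g (CPil (M a)) = (g = {a})"
    proof -
      fix g assume g: "g \<in> C_P P"
      then have "g \<subseteq> I_P P" "g \<noteq> {}" by (auto simp: C_P_def)
      then show "pcl_sat P g (CPil (M a)) = (g = {a})" using Ma by auto
    qed
    show "pcl_sat P \<gamma> (plus_list (map M (a # b # rest))) = (\<gamma> = set (a # b # rest))"
    proof
      assume "pcl_sat P \<gamma> (plus_list (map M (a # b # rest)))"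
      then obtain g1 g2 where "g1 \<in> C_P P" "g2 \<in> C_P P" "\<gamma> = g1 \<union> g2"
        "pcl_sat P g1 (CPil (M a))" "pcl_sat P g2 (plus_list (map M (b # rest)))" by auto
      then show "\<gamma> = set (a # b # rest)" using IH sa by auto
    next
      assume "\<gamma> = set (a # b # rest)"
      then have "\<gamma> = {a} \<union> set (b # rest)" by auto
      then show "pcl_sat P \<gamma> (plus_list (map M (a # b # rest)))"
        using s1 s2 IH sa by (simp del: list.set) blast
    qed
  qed
qed

lemma plus_list_sat:
  assumes M: "\<And>b a. b \<in> I_P P \<Longrightarrow> a \<in> set as \<Longrightarrow> pil_sat b (M a) = (b = a)"
    and ne: "as \<noteq> []" and sub: "set as \<subseteq> I_P P"
  shows "\<gamma> \<in> C_P P \<Longrightarrow> pcl_sat P \<gamma> (plus_list (map M as)) = (\<gamma> = set as)"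
  using plus_list_sat_aux[of as P M] M ne sub by blast

lemma oplus_val:
  assumes add: "\<And>x. add z x = x" "\<And>x. add x z = x" "add u u = u"
  shows "(\<forall>w\<in>set ws. wsem add mul z u P w \<gamma> \<in> {u, z}) \<Longrightarrow>
     wsem add mul z u P (oplus_list z ws) \<gamma> =
       (if \<exists>w\<in>set ws. wsem add mul z u P w \<gamma> = u then u else z)"
proof (induction ws rule: induct_list012)
  case (3 w v vs)
  then show ?case by (auto simp: add split: if_splits)
qed auto

lemma oplus_cong:
  assumes "\<And>js. wsem add mul z u P (F js) \<gamma> = wsem add mul z u P (G js) \<gamma>"
  shows "wsem add mul z u P (oplus_list z (map F ms)) \<gamma> = wsem add mul z u P (oplus_list z (map G ms)) \<gamma>"
  by (induction ms rule: induct_list012) (simp_all add: assms)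

theorem mainTheorem11:
  fixes add mul :: "'d \<Rightarrow> 'd \<Rightarrow> 'd" and val :: "'d list \<Rightarrow> 'd"
    and z u :: 'd and P :: "'p set" and f :: "'p pcl"
  assumes "pv_monoid add val mul z u"
    and "idempotent_pv add"
    and "symmetric_val val"
    and "finite P" and "P \<noteq> {}"
    and "pcl_atoms f \<subseteq> P"
  shows "\<exists>ms :: 'p pil list list.
           (\<forall>js\<in>set ms. js \<noteq> [] \<and> (\<forall>m\<in>set js. full_monomial P m)) \<and>
           (\<forall>\<gamma>\<in>C_P P. wsem add mul z u P (WPcl f) \<gamma> =
              wsem add mul z u P (oplus_list z (map (\<lambda>js. WPcl (plus_list js)) ms)) \<gamma>) \<and>
           (\<forall>\<gamma>\<in>C_P P. wsem add mul z u P (oplus_list z (map (\<lambda>js. WPcl (plus_list js)) ms)) \<gamma> =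
              wsem add mul z u P
                (oplus_list z (map (\<lambda>js. WOtimes (WConst u) (WPcl (plus_list js))) ms)) \<gamma>)"
proof -
  have addz: "\<And>x. add z x = x" "\<And>x. add x z = x" "add u u = u"
    using assms(1,2) unfolding pv_monoid_def idempotent_pv_def by metis+
  have mulu: "\<And>x. mul u x = x" using assms(1) unfolding pv_monoid_def by blast
  obtain xs where xs: "set xs = P" "distinct xs" using assms(4) finite_distinct_list by blast
  define M where "M = (\<lambda>a. monomial a xs)"
  have Msat: "\<And>b a. b \<in> I_P P \<Longrightarrow> a \<in> I_P P \<Longrightarrow> pil_sat b (M a) = (b = a)"
    unfolding M_def sat_monomial I_P_def using xs by blast
  have finC: "finite (C_P P)"
  proof (rule finite_subset)
    show "C_P P \<subseteq> Pow (Pow P)" by (auto simp: C_P_def I_P_def)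
  qed (use assms(4) in simp)
  define S where "S = {\<gamma> \<in> C_P P. pcl_sat P \<gamma> f}"
  have "finite S" using finC by (simp add: S_def)
  then obtain Ls where Ls: "set Ls = S" using finite_list by blast
  define lst where "lst = (\<lambda>g::'p set set. SOME l. set l = g)"
  have lst: "\<And>g. g \<in> C_P P \<Longrightarrow> set (lst g) = g"
  proof -
    fix g assume "g \<in> C_P P"
    then have "g \<subseteq> Pow P" by (auto simp: C_P_def I_P_def)
    then have "finite g" using assms(4) by (simp add: finite_subset)
    then show "set (lst g) = g" unfolding lst_def by (metis (mono_tags) finite_list someI_ex)
  qed
  define ms where "ms = map (\<lambda>g. map M (lst g)) Ls"
  have SC: "S \<subseteq> C_P P" by (auto simp: S_def)
  have plus: "\<And>g \<gamma>. g \<in> S \<Longrightarrow> \<gamma> \<in> C_P P \<Longrightarrow>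
      pcl_sat P \<gamma> (plus_list (map M (lst g))) = (\<gamma> = g)"
  proof -
    fix g \<gamma> assume g: "g \<in> S" and c: "\<gamma> \<in> C_P P"
    have gc: "g \<in> C_P P" using g SC by auto
    have "pcl_sat P \<gamma> (plus_list (map M (lst g))) = (\<gamma> = set (lst g))"
      by (rule plus_list_sat[OF _ _ _ c]) (use Msat lst[OF gc] gc in \<open>auto simp: C_P_def\<close>)
    then show "?thesis g \<gamma>" using lst[OF gc] by simp
  qed
  show ?thesis
  proof (intro exI[of _ ms] conjI ballI)
    fix js assume "js \<in> set ms"
    then obtain g where g: "g \<in> S" "js = map M (lst g)" using Ls ms_def by auto
    have gc: "g \<in> C_P P" using g SC by auto
    show "js \<noteq> []" using g lst[OF gc] gc by (auto simp: C_P_def)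
    fix m assume "m \<in> set js"
    then obtain a where a: "a \<in> g" "m = M a" using g lst[OF gc] by auto
    have "a \<subseteq> P" using a(1) gc by (auto simp: C_P_def I_P_def)
    then show "full_monomial P m" unfolding full_monomial_def M_def a(2)
      using xs by blast
  next
    fix \<gamma> assume c: "\<gamma> \<in> C_P P"
    have "wsem add mul z u P (oplus_list z (map (\<lambda>js. WPcl (plus_list js)) ms)) \<gamma> =
       (if \<exists>w\<in>set (map (\<lambda>js. WPcl (plus_list js)) ms). wsem add mul z u P w \<gamma> = u then u else z)"
      by (rule oplus_val[OF addz]) auto
    also have "\<dots> = (if \<gamma> \<in> S then u else z)"
    proof (cases "u = z")
      case False
      have "(\<exists>w\<in>set (map (\<lambda>js. WPcl (plus_list js)) ms). wsem add mul z u P w \<gamma> = u)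
          = (\<exists>g\<in>S. pcl_sat P \<gamma> (plus_list (map M (lst g))))"
        using False by (auto simp: ms_def Ls)
      also have "\<dots> = (\<gamma> \<in> S)" using plus c by auto
      finally show ?thesis by simp
    qed simp
    also have "\<dots> = wsem add mul z u P (WPcl f) \<gamma>" using c by (simp add: S_def)
    finally show "wsem add mul z u P (WPcl f) \<gamma> =
      wsem add mul z u P (oplus_list z (map (\<lambda>js. WPcl (plus_list js)) ms)) \<gamma>" by simp
  next
    fix \<gamma> assume c: "\<gamma> \<in> C_P P"
    show "wsem add mul z u P (oplus_list z (map (\<lambda>js. WPcl (plus_list js)) ms)) \<gamma> =
       wsem add mul z u P (oplus_list z (map (\<lambda>js. WOtimes (WConst u) (WPcl (plus_list js))) ms)) \<gamma>"
      by (rule oplus_cong) (simp add: mulu)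
  qed
qed

end
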